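(* Fix $\varepsilon>0$ and $R>1$. There is a constant $\lambda_0$ depending only on $\varepsilon$ and $R$, with $\lambda_0=\mathcal{O}(\varepsilon^{-1})$ for fixed $R$, such that for every $\lambda\ge\lambda_0$, every finite nonempty $V\subset\mathbb{R}^d$ and every hierarchy $(\mathcal{T},R)$ on $V$ satisfying the separation property, the initial spanner $\mathcal{S}_0$ (with parameter $\lambda$), viewed as a graph on $V$, is a $(1+\varepsilon)$-spanner of $V$: for all $p,q\in V$ the shortest-path distance in $\mathcal{S}_0$ between $p$ and $q$ is at most $(1+\varepsilon)\lVert pq\rVert$.
   Context: $\lVert xy\rVert$ and $d(x,y)$ denote Euclidean distance. Hierarchy: given $R>1$ and a finite $V\subset\mathbb{R}^d$, a hierarchy $(\mathcal{T},R)$ is a finite rooted tree $\mathcal{T}$ whose nodes, called explicit clusters, are distinct pairs $(p,l)$ with center $p\in V$ and level $l\in\mathbb{Z}$; a cluster $(p,l)$ covers the ball of radius $R^l$ around $p$; every non-root cluster $(p,l)$ has a parent of level $l+1$ whose center $q$ satisfies $d(p,q)\le R^{l+1}$; every point of $V$ is the center of at least one explicit cluster. For every explicit cluster $(p,l)$ and every integer $l'<l$, the pair $(p,l')$ is an implicit cluster; the clusters of the hierarchy are the explicit and implicit ones. Separation property: for any two clusters $(p,l),(q,l)$ of the same level with $p\neq q$, $d(p,q)>R^l$. Initial spanner $\mathcal{S}_0$ with parameter $\lambda>0$: the graph whose vertices are the clusters, with a type I edge between any two clusters $(p,l),(q,l)$ of the same level with $p\ne q$ and $d(p,q)\le\lambda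 R^l$, and a type II edge between every explicit cluster and each of its children in $\mathcal{T}$. As a graph on $V$, $\mathcal{S}_0$ has an edge $\{p,q\}$ of weight $\lVert pq\rVert$ whenever some edge of $\mathcal{S}_0$ joins a cluster centered at $p$ to a cluster centered at $q\ne p$. *)

theory Defs
  imports "HOL-Analysis.Analysis" "HOL-Library.Landau_Symbols"
begin

text \<open>Points of R^d are represented as functions nat => real vanishing at all
  indices >= d, so that the dimension d can be quantified inside the statement.
  The Euclidean distance in R^d:\<close>

definition in_Rd :: "nat \<Rightarrow> (nat \<Rightarrow> real) \<Rightarrow> bool" where
  "in_Rd d x \<longleftrightarrow> (\<forall>i\<ge>d. x i = 0)"

definition eucl_dist :: "nat \<Rightarrow> (nat \<Rightarrow> real) \<Rightarrow> (nat \<Rightarrow> real) \<Rightarrow> real" where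
  "eucl_dist d x y = sqrt (\<Sum>i<d. (x i - y i)^2)"

text \<open>A hierarchy on V with parameter R, given by its set C of explicit clusters
  (pairs (center, level)), its root r, and the parent map par (meaningful on
  C - {r}). Since levels strictly increase along parent links and C is finite,
  this is exactly a finite rooted tree on C.\<close>

definition hierarchy ::
  "('a \<Rightarrow> 'a \<Rightarrow> real) \<Rightarrow> real \<Rightarrow> 'a set \<Rightarrow> ('a \<times> int) set \<Rightarrow> ('a \<times> int)
     \<Rightarrow> (('a \<times> int) \<Rightarrow> ('a \<times> int)) \<Rightarrow> bool" where
  "hierarchy \<delta> R V C r par \<longleftrightarrow>
     finite C \<and> r \<in> C \<and> fst ` C = V \<and>
     (\<forall>c \<in> C - {r}. par c \<in> C \<and> snd (par c) = snd c + 1 \<and>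
                     \<delta> (fst c) (fst (par c)) \<le> R powi (snd c + 1))"

definition is_cluster :: "('a \<times> int) set \<Rightarrow> ('a \<times> int) \<Rightarrow> bool" where
  "is_cluster C c \<longleftrightarrow> (\<exists>l'. (fst c, l') \<in> C \<and> snd c \<le> l')"

definition separation ::
  "('a \<Rightarrow> 'a \<Rightarrow> real) \<Rightarrow> real \<Rightarrow> ('a \<times> int) set \<Rightarrow> bool" where
  "separation \<delta> R C \<longleftrightarrow>
     (\<forall>p q l. is_cluster C (p, l) \<and> is_cluster C (q, l) \<and> p \<noteq> q \<longrightarrow> \<delta> p q > R powi l)"

definition S0_edge ::
  "('a \<Rightarrow> 'a \<Rightarrow> real) \<Rightarrow> real \<Rightarrow> real \<Rightarrow> ('a \<times> int) set \<Rightarrow> ('a \<times> int)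
     \<Rightarrow> (('a \<times> int) \<Rightarrow> ('a \<times> int)) \<Rightarrow> 'a \<Rightarrow> 'a \<Rightarrow> bool" where
  "S0_edge \<delta> R lam C r par p q \<longleftrightarrow> p \<noteq> q \<and>
     ((\<exists>l. is_cluster C (p, l) \<and> is_cluster C (q, l) \<and> \<delta> p q \<le> lam * R powi l) \<or>
      (\<exists>c \<in> C - {r}. (fst c = p \<and> fst (par c) = q) \<or> (fst c = q \<and> fst (par c) = p)))"

text \<open>Walks and shortest-path distance (infinite if no walk exists).\<close>
definition is_walk :: "('a \<Rightarrow> 'a \<Rightarrow> bool) \<Rightarrow> 'a \<Rightarrow> 'a \<Rightarrow> 'a list \<Rightarrow> bool" where
  "is_walk E p q xs \<longleftrightarrow> xs \<noteq> [] \<and> hd xs = p \<and> last xs = q \<and>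
     (\<forall>i. Suc i < length xs \<longrightarrow> E (xs ! i) (xs ! Suc i))"

definition walk_weight :: "('a \<Rightarrow> 'a \<Rightarrow> real) \<Rightarrow> 'a list \<Rightarrow> real" where
  "walk_weight \<delta> xs = (\<Sum>i < length xs - 1. \<delta> (xs ! i) (xs ! Suc i))"

definition sp_dist ::
  "('a \<Rightarrow> 'a \<Rightarrow> real) \<Rightarrow> ('a \<Rightarrow> 'a \<Rightarrow> bool) \<Rightarrow> 'a \<Rightarrow> 'a \<Rightarrow> ereal" where
  "sp_dist \<delta> E p q = Inf {ereal (walk_weight \<delta> xs) | xs. is_walk E p q xs}"

end

theory Submission
  imports Defs
begin

inductive wk :: "('a \<Rightarrow> 'a \<Rightarrow> bool) \<Rightarrow> ('a \<Rightarrow> 'a \<Rightarrow> real) \<Rightarrow> 'a \<Rightarrow> 'a \<Rightarrow> real \<Rightarrow> bool"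
  for E \<delta> where
  wk_refl: "wk E \<delta> p p 0"
| wk_step: "E p q \<Longrightarrow> wk E \<delta> q s w \<Longrightarrow> wk E \<delta> p s (\<delta> p q + w)"

lemma wk_list: "wk E \<delta> p q w \<Longrightarrow> \<exists>xs. is_walk E p q xs \<and> walk_weight \<delta> xs = w"
proof (induction rule: wk.induct)
  case (wk_refl p)
  show ?case by (rule exI[of _ "[p]"]) (simp add: is_walk_def walk_weight_def)
next
  case (wk_step p q s w)
  then obtain xs where xs: "is_walk E q s xs" "walk_weight \<delta> xs = w" by blast
  then obtain m where m: "length xs = Suc m" unfolding is_walk_def by (cases xs) auto
  have hd: "xs ! 0 = q" using xs(1) unfolding is_walk_def by (cases xs) auto
  have "is_walk E p s (p # xs)"
    unfolding is_walk_def
  proof (intro conjI allI impI)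
    show "last (p # xs) = s" using xs(1) unfolding is_walk_def by auto
  next
    fix i assume "Suc i < length (p # xs)"
    then show "E ((p # xs) ! i) ((p # xs) ! Suc i)"
      using xs(1) hd wk_step(1) unfolding is_walk_def by (cases i) auto
  qed auto
  moreover have "walk_weight \<delta> (p # xs) = \<delta> p q + w"
    unfolding walk_weight_def using m hd xs(2)
    by (simp only: length_Cons m diff_Suc_1 sum.lessThan_Suc_shift) (simp add: walk_weight_def m)
  ultimately show ?case by blast
qed

lemma wk_snoc: "wk E \<delta> p q w \<Longrightarrow> E q s \<Longrightarrow> wk E \<delta> p s (w + \<delta> q s)"
proof (induction rule: wk.induct)
  case (wk_refl p)
  then show ?case using wk.wk_step[of E p s \<delta> s 0, OF wk_refl(1) wk.wk_refl] by simp
next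
  case (wk_step p q s' w)
  then show ?case using wk.wk_step[of E p q \<delta> s "w + \<delta> s' s"] by (simp add: add.assoc)
qed

lemma wk_trans: "wk E \<delta> p q w1 \<Longrightarrow> wk E \<delta> q s w2 \<Longrightarrow> wk E \<delta> p s (w1 + w2)"
proof (induction rule: wk.induct)
  case (wk_refl p) then show ?case by simp
next
  case (wk_step p q s' w)
  then show ?case using wk.wk_step[of E p q \<delta> s "w + w2"] by (simp add: add.assoc)
qed

lemma wk_sym:
  assumes "\<And>x y. E x y \<Longrightarrow> E y x" "\<And>x y. \<delta> x y = \<delta> y x"
  shows "wk E \<delta> p q w \<Longrightarrow> wk E \<delta> q p w"
proof (induction rule: wk.induct)
  case (wk_refl p) then show ?case by (rule wk.wk_refl)
next
  case (wk_step p q s w)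
  have "wk E \<delta> s p (w + \<delta> q p)" using wk_snoc[OF wk_step(3) assms(1)[OF wk_step(1)]] .
  then show ?case using assms(2)[of q p] by (simp add: add.commute)
qed

lemma wk_dist:
  assumes "\<And>x. \<delta> x x = 0" "\<And>x y z. \<delta> x z \<le> \<delta> x y + \<delta> y z"
  shows "wk E \<delta> p q w \<Longrightarrow> \<delta> p q \<le> w"
proof (induction rule: wk.induct)
  case (wk_refl p) then show ?case using assms(1) by simp
next
  case (wk_step p q s w)
  then show ?case using assms(2)[of p s q] by simp
qed

lemma wk_sp: "wk E \<delta> p q w \<Longrightarrow> sp_dist \<delta> E p q \<le> ereal w"
  unfolding sp_dist_def using wk_list[of E \<delta> p q w]
  by (force intro: Inf_lower)



lemma top_level:
  assumes H: "hierarchy \<delta> R V C r par"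
  shows "\<forall>c\<in>C. snd c \<le> snd r" "\<forall>c\<in>C. snd c = snd r \<longrightarrow> c = r"
proof -
  have fin: "finite C" and rC: "r \<in> C"
    and pc: "\<And>c. c \<in> C - {r} \<Longrightarrow> par c \<in> C \<and> snd (par c) = snd c + 1"
    using H unfolding hierarchy_def by auto
  define M where "M = Max (snd ` C)"
  have le: "\<And>c. c \<in> C \<Longrightarrow> snd c \<le> M" unfolding M_def using fin by auto
  have top: "\<And>c. c \<in> C \<Longrightarrow> snd c = M \<Longrightarrow> c = r"
  proof (rule ccontr)
    fix c assume c: "c \<in> C" "snd c = M" "c \<noteq> r"
    then have "par c \<in> C" "snd (par c) = M + 1" using pc by auto
    then show False using le by fastforce
  qed
  have "M \<in> snd ` C" unfolding M_def using fin rC by (intro Max_in) auto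
  then obtain c0 where "c0 \<in> C" "snd c0 = M" by auto
  then have "snd r = M" using top by auto
  then show "\<forall>c\<in>C. snd c \<le> snd r" "\<forall>c\<in>C. snd c = snd r \<longrightarrow> c = r"
    using le top by auto
qed

lemma anc:
  fixes R :: real
  assumes H: "hierarchy \<delta> R V C r par" and R1: "R > 1"
    and d0: "\<And>x. \<delta> x x = 0"
    and pL: "(p, L) \<in> C" and lamdummy: "lam = lam"
  defines "E \<equiv> S0_edge \<delta> R lam C r par"
  defines "\<alpha> \<equiv> R / (R - 1)"
  shows "l \<le> snd r \<Longrightarrow> \<exists>a w l'. (a, l') \<in> C \<and> l \<le> l' \<and> wk E \<delta> p a w \<and> w \<le> \<alpha> * R powi l"
proof -
  have apos: "\<alpha> > 0" unfolding \<alpha>_def using R1 by simp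
  have pc: "\<And>c. c \<in> C - {r} \<Longrightarrow> par c \<in> C \<and> snd (par c) = snd c + 1 \<and>
                     \<delta> (fst c) (fst (par c)) \<le> R powi (snd c + 1)"
    using H unfolding hierarchy_def by auto
  have Rs: "\<And>i. R powi (i + 1) = R powi i * R" using R1 by (simp add: power_int_add_1)
  have mono: "\<And>i. \<alpha> * R powi i \<le> \<alpha> * R powi (i+1)"
    using apos R1 by (intro mult_left_mono power_int_increasing) auto
  show "l \<le> snd r \<Longrightarrow> ?thesis"
  proof (cases "l \<le> L")
    case True
    then show ?thesis using pL apos R1
      by (intro exI[of _ p] exI[of _ 0] exI[of _ L]) (auto intro: wk.wk_refl)
  next
    case False
    then have "L \<le> l" by simp
    then show "l \<le> snd r \<Longrightarrow> ?thesis"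
    proof (induction l rule: int_ge_induct)
      case base
      then show ?case using pL apos R1
        by (intro exI[of _ p] exI[of _ 0] exI[of _ L]) (auto intro: wk.wk_refl)
    next
      case (step i)
      then obtain a w l' where aw: "(a, l') \<in> C" "i \<le> l'" "wk E \<delta> p a w" "w \<le> \<alpha> * R powi i"
        by auto
      show ?case
      proof (cases "i + 1 \<le> l'")
        case True
        then show ?thesis using aw mono[of i] by (intro exI[of _ a] exI[of _ w] exI[of _ l']) auto
      next
        case False
        then have l'i: "l' = i" using aw by simp
        have cr: "(a, i) \<in> C - {r}" using aw l'i step.prems by auto
        define b where "b = fst (par (a, i))"
        have b: "(b, i + 1) \<in> C" "\<delta> a b \<le> R powi (i + 1)"
          using pc[OF cr] unfolding b_def by (metis fst_conv snd_conv prod.collapse)+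
        have key: "w + \<delta> a b \<le> \<alpha> * R powi (i+1)"
        proof -
          have "w + \<delta> a b \<le> \<alpha> * R powi i + R powi i * R" using aw(4) b(2) Rs by simp
          also have "\<dots> = R powi i * (\<alpha> + R)" by (simp add: algebra_simps)
          also have "\<alpha> + R = \<alpha> * R" unfolding \<alpha>_def using R1 by (simp add: field_simps)
          finally show ?thesis using Rs[of i] by (simp add: mult.commute mult.left_commute)
        qed
        show ?thesis
        proof (cases "a = b")
          case True
          then show ?thesis using aw b mono[of i]
            by (intro exI[of _ b] exI[of _ w] exI[of _ "i+1"]) auto
        next
          case False
          have "E a b" unfolding E_def S0_edge_def using False cr b_def by (metis fst_conv)
          then have "wk E \<delta> p b (w + \<delta> a b)" by (rule wk_snoc[OF aw(3)])
          then show ?thesis using b key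
            by (intro exI[of _ b] exI[of _ "w + \<delta> a b"] exI[of _ "i+1"]) auto
        qed
      qed
    qed
  qed
qed


lemma main_abs:
  fixes R :: real and \<delta> :: "'a \<Rightarrow> 'a \<Rightarrow> real"
  assumes H: "hierarchy \<delta> R V C r par" and Sep: "separation \<delta> R C" and R1: "R > 1"
    and d0: "\<And>x. \<delta> x x = 0" and dsym: "\<And>x y. \<delta> x y = \<delta> y x"
    and tri: "\<And>x y z. \<delta> x z \<le> \<delta> x y + \<delta> y z"
    and eps: "\<epsilon> > 0"
    and lam: "lam \<ge> 2 * (R / (R - 1)) + 4 * (R / (R - 1)) * R / \<epsilon>"
    and pV: "p \<in> V" and qV: "q \<in> V"
  shows "sp_dist \<delta> (S0_edge \<delta> R lam C r par) p q \<le> ereal ((1 + \<epsilon>) * \<delta> p q)"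
proof -
  define E where "E = S0_edge \<delta> R lam C r par"
  define \<alpha> where "\<alpha> = R / (R - 1)"
  have apos: "\<alpha> > 0" unfolding \<alpha>_def using R1 by simp
  have dnn: "\<And>x y. 0 \<le> \<delta> x y" using tri d0 dsym by (metis add_le_same_cancel1 mult_2 zero_le_double_add_iff_zero_le_single_add)
  have wd: "\<And>x y w. wk E \<delta> x y w \<Longrightarrow> \<delta> x y \<le> w"
    by (rule wk_dist[of \<delta>]) (auto intro: d0 tri)
  have Esym: "\<And>x y. E x y \<Longrightarrow> E y x" unfolding E_def S0_edge_def using dsym by metis
  have FV: "fst ` C = V" using H unfolding hierarchy_def by auto
  have tl: "\<forall>c\<in>C. snd c \<le> snd r" "\<forall>c\<in>C. snd c = snd r \<longrightarrow> c = r"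
    using top_level[OF H] by auto
  show ?thesis
  proof (cases "p = q")
    case True
    then show ?thesis using wk_sp[OF wk.wk_refl[of E \<delta> p]] d0 unfolding E_def by simp
  next
    case pq: False
    obtain Lp where Lp: "(p, Lp) \<in> C" using pV FV by force
    obtain Lq where Lq: "(q, Lq) \<in> C" using qV FV by force
    have ancp: "\<And>l. l \<le> snd r \<Longrightarrow> \<exists>a w l'. (a, l') \<in> C \<and> l \<le> l' \<and> wk E \<delta> p a w \<and> w \<le> \<alpha> * R powi l"
      using anc[OF H R1 d0 Lp, of lam] unfolding E_def \<alpha>_def by blast
    have ancq: "\<And>l. l \<le> snd r \<Longrightarrow> \<exists>a w l'. (a, l') \<in> C \<and> l \<le> l' \<and> wk E \<delta> q a w \<and> w \<le> \<alpha> * R powi l"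
      using anc[OF H R1 d0 Lq, of lam] unfolding E_def \<alpha>_def by blast
    have dpos: "\<delta> p q > 0"
    proof -
      have "is_cluster C (p, min Lp Lq)" "is_cluster C (q, min Lp Lq)"
        using Lp Lq unfolding is_cluster_def by force+
      then have "\<delta> p q > R powi (min Lp Lq)" using Sep pq unfolding separation_def by blast
      moreover have "R powi (min Lp Lq) > 0" using R1 by simp
      ultimately show ?thesis by linarith
    qed
    define good where "good l \<longleftrightarrow> (\<exists>a wa la b wb lb. (a,la) \<in> C \<and> l \<le> la \<and> wk E \<delta> p a wa \<and> wa \<le> \<alpha> * R powi l
        \<and> (b,lb) \<in> C \<and> l \<le> lb \<and> wk E \<delta> q b wb \<and> wb \<le> \<alpha> * R powi l \<and> (a = b \<or> \<delta> a b \<le> lam * R powi l))" for l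
    define S where "S = {l. l \<le> snd r \<and> good l}"
    have lam2: "lam - 2 * \<alpha> > 0"
    proof -
      have "4 * \<alpha> * R / \<epsilon> > 0" using apos R1 eps by simp
      then show ?thesis using lam unfolding \<alpha>_def by linarith
    qed
    have gbound: "\<delta> p q \<le> (lam + 2 * \<alpha>) * R powi l" if gl: "good l" for l
    proof -
      obtain a wa b wb where g: "wk E \<delta> p a wa" "wa \<le> \<alpha> * R powi l"
        "wk E \<delta> q b wb" "wb \<le> \<alpha> * R powi l" "a = b \<or> \<delta> a b \<le> lam * R powi l"
        using gl unfolding good_def by blast
      have "lam * R powi l \<ge> 0" using lam2 apos R1 by simp
      then have "\<delta> a b \<le> lam * R powi l" using g(5) d0 by auto
      moreover have "\<delta> p a \<le> wa" "\<delta> q b \<le> wb" using wd g by blast+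
      moreover have "\<delta> p q \<le> \<delta> p a + \<delta> a b + \<delta> b q" using tri by (meson add_mono order_trans order_refl)
      ultimately show ?thesis using g dsym[of b q] by (simp add: algebra_simps)
    qed
    have rS: "snd r \<in> S"
    proof -
      obtain a wa la where A: "(a,la) \<in> C" "snd r \<le> la" "wk E \<delta> p a wa" "wa \<le> \<alpha> * R powi snd r"
        using ancp[of "snd r"] by auto
      obtain b wb lb where B: "(b,lb) \<in> C" "snd r \<le> lb" "wk E \<delta> q b wb" "wb \<le> \<alpha> * R powi snd r"
        using ancq[of "snd r"] by auto
      have "(a, la) = r" using tl A(1,2) by force
      moreover have "(b, lb) = r" using tl B(1,2) by force
      ultimately have "a = b" by auto
      then show ?thesis unfolding S_def good_def using A B by blast
    qed
    define c where "c = \<delta> p q / (lam + 2 * \<alpha>)"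
    have cpos: "c > 0" unfolding c_def using dpos lam2 apos by simp
    obtain n where n: "(1 / R) ^ n < c" using real_arch_pow_inv[OF cpos, of "1/R"] R1 by auto
    have Sb: "S \<subseteq> {- int n .. snd r}"
    proof
      fix l assume "l \<in> S"
      then have l: "l \<le> snd r" "good l" unfolding S_def by auto
      have "c * (lam + 2 * \<alpha>) \<le> (lam + 2 * \<alpha>) * R powi l" using gbound[OF l(2)] lam2 apos
        unfolding c_def by simp
      then have "c \<le> R powi l" using lam2 apos by (simp add: mult.commute)
      then have "R powi (- int n) < R powi l" using n by (simp add: power_int_minus power_one_over inverse_eq_divide)
      then have "- int n < l" using R1
        by (metis linorder_not_le power_int_increasing less_imp_le not_le)
      then show "l \<in> {- int n .. snd r}" using l by auto
    qed
    have finS: "finite S" using Sb finite_subset by blast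
    define l0 where "l0 = Min S"
    have l0S: "l0 \<in> S" unfolding l0_def using finS rS by (intro Min_in) auto
    have l1: "l0 - 1 \<notin> S"
    proof
      assume "l0 - 1 \<in> S" then have "l0 \<le> l0 - 1" unfolding l0_def using finS by (rule Min_le[rotated])
      then show False by simp
    qed
    have Rs: "R powi l0 = R * R powi (l0 - 1)" using R1 power_int_add_1'[of R "l0 - 1"] by simp
    have low: "(lam - 2 * \<alpha>) * R powi (l0 - 1) < \<delta> p q"
    proof -
      have le: "l0 - 1 \<le> snd r" using l0S unfolding S_def by auto
      obtain a wa la where A: "(a,la) \<in> C" "l0 - 1 \<le> la" "wk E \<delta> p a wa" "wa \<le> \<alpha> * R powi (l0 - 1)"
        using ancp[OF le] by auto
      obtain b wb lb where B: "(b,lb) \<in> C" "l0 - 1 \<le> lb" "wk E \<delta> q b wb" "wb \<le> \<alpha> * R powi (l0 - 1)"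
        using ancq[OF le] by auto
      have "\<not> (a = b \<or> \<delta> a b \<le> lam * R powi (l0 - 1))"
        using l1 le A B unfolding S_def good_def by blast
      then have ab: "\<delta> a b > lam * R powi (l0 - 1)" by auto
      have "\<delta> p a \<le> wa" "\<delta> q b \<le> wb" using wd A B by blast+
      moreover have "\<delta> a b \<le> \<delta> a p + \<delta> p q + \<delta> q b" using tri by (meson add_mono order_trans order_refl)
      ultimately show ?thesis using ab A(4) B(4) dsym[of a p] by (simp add: algebra_simps)
    qed
    obtain a wa la b wb lb where g: "(a,la) \<in> C" "l0 \<le> la" "wk E \<delta> p a wa" "wa \<le> \<alpha> * R powi l0"
        "(b,lb) \<in> C" "l0 \<le> lb" "wk E \<delta> q b wb" "wb \<le> \<alpha> * R powi l0" "a = b \<or> \<delta> a b \<le> lam * R powi l0"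
      using l0S unfolding S_def good_def by blast
    have wqb: "wk E \<delta> b q wb" using wk_sym[OF Esym dsym g(7)] .
    have walk: "wk E \<delta> p q (wa + \<delta> a b + wb)"
    proof (cases "a = b")
      case True
      then show ?thesis using wk_trans[OF g(3), of q wb] wqb d0 by simp
    next
      case False
      have "is_cluster C (a, l0)" "is_cluster C (b, l0)" using g unfolding is_cluster_def by auto
      then have "E a b" unfolding E_def S0_edge_def using False g(9) by blast
      then have "wk E \<delta> a q (\<delta> a b + wb)" using wqb by (rule wk.wk_step)
      then show ?thesis using wk_trans[OF g(3)] by (simp add: add.assoc)
    qed
    have wbound: "wa + \<delta> a b + wb \<le> \<delta> p q + 4 * \<alpha> * R powi l0"
    proof -
      have "\<delta> p a \<le> wa" "\<delta> q b \<le> wb" using wd g by blast+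
      moreover have "\<delta> a b \<le> \<delta> a p + \<delta> p q + \<delta> q b" using tri by (meson add_mono order_trans order_refl)
      ultimately show ?thesis using g(4,8) dsym[of a p] by (simp add: algebra_simps)
    qed
    have "4 * \<alpha> * R powi l0 \<le> \<epsilon> * \<delta> p q"
    proof -
      have k: "4 * \<alpha> * R \<le> \<epsilon> * (lam - 2 * \<alpha>)"
      proof -
        have "4 * \<alpha> * R / \<epsilon> \<le> lam - 2 * \<alpha>" using lam unfolding \<alpha>_def by simp
        then show ?thesis using eps by (simp add: divide_le_eq mult.commute)
      qed
      have pp: "R powi (l0 - 1) > 0" using R1 by simp
      have "4 * \<alpha> * R powi l0 = (4 * \<alpha> * R) * R powi (l0 - 1)" using Rs by simp
      also have "\<dots> \<le> (\<epsilon> * (lam - 2 * \<alpha>)) * R powi (l0 - 1)" using k pp by (intro mult_right_mono) auto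
      also have "\<dots> = \<epsilon> * ((lam - 2 * \<alpha>) * R powi (l0 - 1))" by simp
      also have "\<dots> \<le> \<epsilon> * \<delta> p q" using low eps by (intro mult_left_mono) auto
      finally show ?thesis .
    qed
    then have "wa + \<delta> a b + wb \<le> (1 + \<epsilon>) * \<delta> p q" using wbound by (simp add: algebra_simps)
    then have "sp_dist \<delta> E p q \<le> ereal (wa + \<delta> a b + wb)" "ereal (wa + \<delta> a b + wb) \<le> ereal ((1 + \<epsilon>) * \<delta> p q)"
      using wk_sp[OF walk] by auto
    then show ?thesis unfolding E_def by (metis order_trans)
  qed
qed


lemma eucl_L2: "eucl_dist d x y = L2_set (\<lambda>i. x i - y i) {..<d}"
  unfolding eucl_dist_def L2_set_def by simp

lemma eucl_tri: "eucl_dist d x z \<le> eucl_dist d x y + eucl_dist d y z"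
proof -
  have "eucl_dist d x z = L2_set (\<lambda>i. (x i - y i) + (y i - z i)) {..<d}"
    unfolding eucl_L2 by simp
  also have "\<dots> \<le> eucl_dist d x y + eucl_dist d y z"
    unfolding eucl_L2 by (rule L2_set_triangle_ineq)
  finally show ?thesis .
qed

lemma eucl_sym: "eucl_dist d x y = eucl_dist d y x"
  unfolding eucl_dist_def by (simp add: power2_commute)

lemma eucl_0: "eucl_dist d x x = 0"
  unfolding eucl_dist_def by simp

theorem lemma3:
  fixes R :: real
  assumes "R > 1"
  shows "\<exists>lam0 :: real \<Rightarrow> real.
           lam0 \<in> O[at_right 0](\<lambda>\<epsilon>. 1 / \<epsilon>) \<and>
           (\<forall>\<epsilon> > 0. \<forall>lam \<ge> lam0 \<epsilon>. \<forall>(d::nat) (V :: (nat \<Rightarrow> real) set) C r par.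
              finite V \<and> V \<noteq> {} \<and> (\<forall>x\<in>V. in_Rd d x) \<and>
              hierarchy (eucl_dist d) R V C r par \<and> separation (eucl_dist d) R C \<longrightarrow>
              (\<forall>p\<in>V. \<forall>q\<in>V. sp_dist (eucl_dist d) (S0_edge (eucl_dist d) R lam C r par) p q
                               \<le> ereal ((1 + \<epsilon>) * eucl_dist d p q)))"
proof -
  define \<alpha> where "\<alpha> = R / (R - 1)"
  have apos: "\<alpha> > 0" unfolding \<alpha>_def using assms by simp
  define lam0 where "lam0 = (\<lambda>\<epsilon>::real. 2 * \<alpha> + 4 * \<alpha> * R / \<epsilon>)"
  have O: "lam0 \<in> O[at_right 0](\<lambda>\<epsilon>. 1 / \<epsilon>)"
  proof (rule bigoI[where c = "2 * \<alpha> + 4 * \<alpha> * R"])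
    show "\<forall>\<^sub>F x in at_right 0. norm (lam0 x) \<le> (2 * \<alpha> + 4 * \<alpha> * R) * norm (1 / x)"
      using eventually_at_right_real[of 0 "1::real", OF zero_less_one]
    proof (rule eventually_mono)
      fix x :: real assume x: "x \<in> {0<..<1}"
      have "lam0 x \<ge> 0" unfolding lam0_def using x apos assms by simp
      moreover have "2 * \<alpha> \<le> 2 * \<alpha> / x" using x apos by (simp add: le_divide_eq)
      moreover have "x * x \<le> x" using x by (simp add: mult_le_cancel_right1)
      then have "\<alpha> * (x * x) \<le> \<alpha> * x" using apos by (intro mult_left_mono) auto
      ultimately show "norm (lam0 x) \<le> (2 * \<alpha> + 4 * \<alpha> * R) * norm (1 / x)"
        unfolding lam0_def using x by (simp add: field_simps)
    qed
  qed
  show ?thesis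
  proof (intro exI[of _ lam0] conjI O allI impI ballI)
    fix \<epsilon> lam :: real and d V C r par p q
    assume e: "\<epsilon> > 0" and l: "lam0 \<epsilon> \<le> lam"
      and h: "finite V \<and> V \<noteq> {} \<and> (\<forall>x\<in>V. in_Rd d x) \<and> hierarchy (eucl_dist d) R V C r par \<and>
              separation (eucl_dist d) R C"
      and p: "p \<in> V" and q: "q \<in> V"
    show "sp_dist (eucl_dist d) (S0_edge (eucl_dist d) R lam C r par) p q
                               \<le> ereal ((1 + \<epsilon>) * eucl_dist d p q)"
      using main_abs[of "eucl_dist d" R V C r par, OF _ _ assms eucl_0 eucl_sym eucl_tri e, of lam p q]
        h l p q unfolding lam0_def \<alpha>_def by auto
  qed
qed

end
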